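(* Let $P$ and $Q$ be distinct planes in $\mathbb{H}^4$ intersecting in a single point. Then $H_PH_Q$ is a type-II orientation preserving elliptic isometry.
   Context: A plane is a $2$-dimensional totally geodesic subspace of $\mathbb{H}^4$. For a plane $P$, the half-turn $H_P$ is the composition of reflections in two orthogonal hyperplanes intersecting in $P$. An elliptic isometry of $\mathbb{H}^4$ is of type II if it fixes a unique point of $\mathbb{H}^4$. *)

theory Defs
  imports "HOL-Analysis.Analysis"
begin

text \<open>Hyperboloid model of hyperbolic 4-space inside Minkowski space R^{4,1}.
  Coordinate 0 of real^5 is the time coordinate.\<close>

definition mink :: "real^5 \<Rightarrow> real^5 \<Rightarrow> real" where
  "mink x y = (\<Sum>i\<in>UNIV. x $ i * y $ i) - 2 * (x $ 0) * (y $ 0)"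

definition H4 :: "(real^5) set" where
  "H4 = {x. mink x x = -1 \<and> x $ 0 > 0}"

definition hyp_isometry :: "real^5^5 \<Rightarrow> bool" where
  "hyp_isometry M \<longleftrightarrow> (\<forall>x y. mink (M *v x) (M *v y) = mink x y) \<and> (\<lambda>x. M *v x) ` H4 = H4"

definition orientation_preserving :: "real^5^5 \<Rightarrow> bool" where
  "orientation_preserving M \<longleftrightarrow> hyp_isometry M \<and> det M = 1"

definition elliptic :: "real^5^5 \<Rightarrow> bool" where
  "elliptic M \<longleftrightarrow> hyp_isometry M \<and> (\<exists>x\<in>H4. M *v x = x)"

definition elliptic_type_II :: "real^5^5 \<Rightarrow> bool" where
  "elliptic_type_II M \<longleftrightarrow> elliptic M \<and> (\<exists>!x. x \<in> H4 \<and> M *v x = x)"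

text \<open>A plane (2-dim totally geodesic subspace) is the nonempty intersection of H^4 with a
  3-dimensional linear subspace.\<close>
definition hyp_plane :: "(real^5) set \<Rightarrow> bool" where
  "hyp_plane P \<longleftrightarrow> (\<exists>V. subspace V \<and> dim V = 3 \<and> P = V \<inter> H4 \<and> P \<noteq> {})"

definition hyperplane_of :: "real^5 \<Rightarrow> (real^5) set" where
  "hyperplane_of n = {x\<in>H4. mink x n = 0}"

definition reflection_mat :: "real^5 \<Rightarrow> real^5^5" where
  "reflection_mat n = (\<chi> i j. (if i = j then 1 else 0) - 2 * n $ i * mink (axis j 1) n / mink n n)"

definition is_half_turn :: "(real^5) set \<Rightarrow> real^5^5 \<Rightarrow> bool" where
  "is_half_turn P A \<longleftrightarrow> (\<exists>n1 n2. mink n1 n1 > 0 \<and> mink n2 n2 > 0 \<and> mink n1 n2 = 0 \<and>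
      P = hyperplane_of n1 \<inter> hyperplane_of n2 \<and> A = reflection_mat n1 ** reflection_mat n2)"


end

theory Submission
  imports Defs
begin

lemma mink_inner: "mink x y = inner x y - 2 * x$0 * y$0"
  by (simp add: mink_def inner_vec_def)

lemma mink_sym: "mink x y = mink y x"
  by (simp add: mink_inner inner_commute)

lemma mink_add_left: "mink (x + y) z = mink x z + mink y z"
  by (simp add: mink_inner inner_add_left algebra_simps)

lemma mink_add_right: "mink z (x + y) = mink z x + mink z y"
  by (simp add: mink_inner inner_add_right algebra_simps)

lemma mink_diff_left: "mink (x - y) z = mink x z - mink y z"
  by (simp add: mink_inner inner_diff_left algebra_simps)

lemma mink_diff_right: "mink z (x - y) = mink z x - mink z y"
  by (simp add: mink_inner inner_diff_right algebra_simps)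

lemma mink_scale_left: "mink (c *\<^sub>R x) z = c * mink x z"
  by (simp add: mink_inner algebra_simps)

lemma mink_scale_right: "mink z (c *\<^sub>R x) = c * mink z x"
  by (simp add: mink_inner algebra_simps)

lemma mink_neg_left: "mink (- x) z = - mink x z"
  by (simp add: mink_inner algebra_simps)

lemmas mink_simps = mink_add_left mink_add_right mink_diff_left mink_diff_right
  mink_scale_left mink_scale_right mink_neg_left

lemma mink_axis: "mink (axis j 1) n = (if j = 0 then - n$j else n$j)"
proof -
  have "(\<Sum>i\<in>UNIV. axis j 1 $ i * n $ i) = (\<Sum>i\<in>UNIV. if i = j then n$j else 0)"
    by (rule sum.cong) (auto simp: axis_def)
  also have "\<dots> = n$j" by simp
  finally show ?thesis by (auto simp: mink_def axis_def)
qed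

lemma refl_apply:
  "reflection_mat n *v x = x - (2 * mink x n / mink n n) *\<^sub>R n"
proof -
  have s: "(\<Sum>j\<in>UNIV. mink (axis j 1) n * x$j) = mink x n"
  proof -
    have "(\<Sum>j\<in>UNIV. mink (axis j 1) n * x$j) = (\<Sum>j\<in>UNIV. x$j * n$j) - 2 * x$0 * n$0"
    proof -
      have "(\<Sum>j\<in>UNIV. mink (axis j 1) n * x$j) = (\<Sum>j\<in>UNIV. x$j * n$j - (if j = 0 then 2 * x$0 * n$0 else 0))"
        by (rule sum.cong) (auto simp: mink_axis)
      also have "\<dots> = (\<Sum>j\<in>UNIV. x$j * n$j) - 2 * x$0 * n$0"
        by (simp add: sum_subtractf)
      finally show ?thesis .
    qed
    then show ?thesis by (simp add: mink_def)
  qed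
  show ?thesis
  proof (subst vec_eq_iff, intro allI)
    fix i
    have "(reflection_mat n *v x) $ i = (\<Sum>j\<in>UNIV. ((if i = j then 1 else 0) - 2 * n $ i * mink (axis j 1) n / mink n n) * x$j)"
      by (simp add: reflection_mat_def matrix_vector_mult_def)
    also have "\<dots> = (\<Sum>j\<in>UNIV. (if i = j then x$j else 0)) - (2 * n$i / mink n n) * (\<Sum>j\<in>UNIV. mink (axis j 1) n * x$j)"
    proof -
      have "(\<Sum>j\<in>UNIV. ((if i = j then 1 else 0) - 2 * n $ i * mink (axis j 1) n / mink n n) * x$j)
          = (\<Sum>j\<in>UNIV. (if i = j then x$j else 0) - (2 * n$i / mink n n) * (mink (axis j 1) n * x$j))"
        by (rule sum.cong) (auto simp: algebra_simps)
      then show ?thesis by (simp add: sum_subtractf sum_distrib_left)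
    qed
    also have "\<dots> = x$i - (2 * n$i / mink n n) * mink x n"
      using s by simp
    finally show "(reflection_mat n *v x) $ i = (x - (2 * mink x n / mink n n) *\<^sub>R n) $ i"
      by simp
  qed
qed

lemma refl_isom:
  assumes "mink n n \<noteq> 0"
  shows "mink (reflection_mat n *v x) (reflection_mat n *v y) = mink x y"
  using assms by (simp add: refl_apply mink_simps mink_sym[of n x] mink_sym[of n y] field_simps)

lemma refl_invol:
  assumes "mink n n \<noteq> 0"
  shows "reflection_mat n *v (reflection_mat n *v x) = x"
proof -
  define k where "k = 2 * mink x n / mink n n"
  have h: "mink (x - k *\<^sub>R n) n = - mink x n"
    using assms by (simp add: k_def mink_simps field_simps)
  have "reflection_mat n *v (reflection_mat n *v x) = (x - k *\<^sub>R n) - (2 * mink (x - k *\<^sub>R n) n / mink n n) *\<^sub>R n"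
    by (simp only: refl_apply k_def)
  also have "\<dots> = (x - k *\<^sub>R n) - (- k) *\<^sub>R n"
    unfolding h by (simp add: k_def)
  also have "\<dots> = x" by simp
  finally show ?thesis .
qed

lemma refl_sq:
  assumes "mink n n \<noteq> 0"
  shows "reflection_mat n ** reflection_mat n = mat 1"
  using refl_invol[OF assms] by (simp add: matrix_eq matrix_vector_mul_assoc[symmetric])

lemma refl_scale:
  assumes "c \<noteq> 0"
  shows "reflection_mat (c *\<^sub>R n) = reflection_mat n"
  using assms by (simp add: matrix_eq refl_apply mink_simps field_simps)

lemma refl_conj:
  assumes c: "mink c c \<noteq> 0"
  shows "reflection_mat c ** reflection_mat a ** reflection_mat c = reflection_mat (reflection_mat c *v a)"
proof -
  let ?b = "reflection_mat c *v a"
  have bb: "mink ?b ?b = mink a a" using refl_isom[OF c] .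
  have key: "mink (reflection_mat c *v x) a = mink x ?b" for x
  proof -
    have "mink (reflection_mat c *v x) a = mink (reflection_mat c *v x) (reflection_mat c *v ?b)"
      by (simp only: refl_invol[OF c])
    also have "\<dots> = mink x ?b" by (rule refl_isom[OF c])
    finally show ?thesis .
  qed
  have lin: "reflection_mat c *v (y - t *\<^sub>R a) = reflection_mat c *v y - t *\<^sub>R ?b" for y t
    by (simp add: matrix_vector_mult_diff_distrib matrix_vector_mult_scaleR)
  show ?thesis
  proof (subst matrix_eq, intro allI)
    fix x
    have "(reflection_mat c ** reflection_mat a ** reflection_mat c) *v x
       = reflection_mat c *v (reflection_mat a *v (reflection_mat c *v x))"
      by (simp add: matrix_vector_mul_assoc matrix_mul_assoc)
    also have "\<dots> = x - (2 * mink x ?b / mink a a) *\<^sub>R ?b"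
      by (simp only: refl_apply[of a] lin refl_invol[OF c] key)
    also have "\<dots> = reflection_mat ?b *v x"
      by (simp only: refl_apply[of ?b x] bb)
    finally show "(reflection_mat c ** reflection_mat a ** reflection_mat c) *v x = reflection_mat ?b *v x" .
  qed
qed

lemma axis_nth': "axis k x $ i = (if i = k then x else 0)"
  by (simp add: axis_def)

lemma one_ne_zero5: "(1::5) \<noteq> 0" by simp

lemma det_refl_e1: "det (reflection_mat (axis 1 1)) = -1"
proof -
  have m11: "mink (axis 1 1) (axis (1::5) 1) = 1"
    by (simp add: mink_axis)
  have ent: "reflection_mat (axis 1 1) $ i $ j = (if i = j then (if i = 1 then -1 else 1) else 0)" for i j
    by (auto simp: reflection_mat_def m11 mink_axis axis_nth')
  have "det (reflection_mat (axis 1 1)) = (\<Prod>i\<in>UNIV. (if i = (1::5) then -1 else 1 :: real))"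
    by (subst det_diagonal) (auto simp: ent)
  also have "\<dots> = -1"
    by (subst prod.remove[of _ 1]) auto
  finally show ?thesis .
qed

lemma det_refl:
  assumes "mink n n > 0"
  shows "det (reflection_mat n) = -1"
proof -
  define a where "a = sqrt (mink n n) *\<^sub>R (axis (1::5) (1::real))"
  have m11: "mink (axis 1 1) (axis (1::5) 1) = 1"
    by (simp add: mink_axis)
  have aa: "mink a a = mink n n"
    using assms by (simp add: a_def mink_simps m11)
  have Ra: "reflection_mat a = reflection_mat (axis 1 1)"
    using assms by (simp add: a_def refl_scale)
  have conj: "det (reflection_mat (reflection_mat c *v a)) = -1" if c: "mink c c \<noteq> 0" for c
  proof -
    have "det (reflection_mat (reflection_mat c *v a)) = det (reflection_mat c) * det (reflection_mat a) * det (reflection_mat c)"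
      by (simp add: refl_conj[OF c, symmetric] det_mul)
    also have "\<dots> = det (reflection_mat c ** reflection_mat c) * det (reflection_mat a)"
      by (simp add: det_mul)
    also have "\<dots> = -1" using c by (simp add: refl_sq Ra det_refl_e1)
    finally show ?thesis .
  qed
  show ?thesis
  proof (cases "mink a n = mink n n")
    case False
    define c where "c = a - n"
    have cc: "mink c c = 2 * mink n n - 2 * mink a n"
      using mink_sym[of n a] by (simp add: c_def mink_simps aa)
    then have c0: "mink c c \<noteq> 0" using False by simp
    have "reflection_mat c *v a = n"
    proof -
      have "mink a c = mink c c / 2" using mink_sym[of n a] by (simp add: cc c_def mink_simps aa)
      then have e: "2 * mink a c / mink c c = 1" using c0 by simp
      have "reflection_mat c *v a = a - 1 *\<^sub>R c" by (simp only: refl_apply e)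
      then show ?thesis by (simp add: c_def)
    qed
    then show ?thesis using conj[OF c0] by simp
  next
    case True
    define c where "c = a + n"
    have na: "mink n a = mink n n" using True by (simp add: mink_sym)
    have cc: "mink c c = 4 * mink n n"
      using True by (simp add: c_def mink_simps aa na)
    then have c0: "mink c c \<noteq> 0" using assms by simp
    have "reflection_mat c *v a = - n"
    proof -
      have "mink a c = mink c c / 2" using True by (simp add: cc c_def mink_simps aa na)
      then have e: "2 * mink a c / mink c c = 1" using c0 by simp
      have "reflection_mat c *v a = a - 1 *\<^sub>R c" by (simp only: refl_apply e)
      then show ?thesis by (simp add: c_def)
    qed
    then have "reflection_mat (reflection_mat c *v a) = reflection_mat n"
      using refl_scale[of "-1" n] by simp
    then show ?thesis using conj[OF c0] by simp
  qed
qed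

lemma comp_sq_le: "(x$i)^2 \<le> inner x (x::real^5)"
proof -
  have "\<bar>x$i\<bar> \<le> \<bar>norm x\<bar>" using component_le_norm_cart[of x i] by simp
  then have "\<bar>x$i\<bar>^2 \<le> (norm x)^2" using power_mono[of "\<bar>x$i\<bar>" "norm x" 2] by simp
  then have "(x$i)^2 \<le> (norm x)^2" by simp
  then show ?thesis by (simp add: power2_norm_eq_inner)
qed

lemma sheet:
  assumes xx: "mink x x = -1" and x0: "x$0 > 0" and yy: "mink y y = -1" and xy: "mink x y < 0"
  shows "y$0 > 0"
proof (rule ccontr)
  assume "\<not> y$0 > 0"
  then have y0: "y$0 \<le> 0" by simp
  have X: "inner x x = 2 * (x$0)^2 - 1" using xx by (simp add: mink_inner power2_eq_square)
  have Y: "inner y y = 2 * (y$0)^2 - 1" using yy by (simp add: mink_inner power2_eq_square)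
  have x1: "(x$0)^2 \<ge> 1" using comp_sq_le[of x 0] X by simp
  have y1: "(y$0)^2 \<ge> 1" using comp_sq_le[of y 0] Y by simp
  have q: "x$0 * y$0 \<le> 0" using x0 y0 by (simp add: mult_nonneg_nonpos)
  have p: "inner x y < 2 * x$0 * y$0" using xy by (simp add: mink_inner)
  have "(2 * x$0 * y$0)^2 < (inner x y)^2"
  proof -
    have "0 \<le> - (2 * x$0 * y$0)" using q by simp
    moreover have "- (2 * x$0 * y$0) < - inner x y" using p by simp
    ultimately have "(- (2 * x$0 * y$0))^2 < (- inner x y)^2"
      using power_strict_mono[of "- (2 * x$0 * y$0)" "- inner x y" 2] by simp
    then show ?thesis by simp
  qed
  also have "\<dots> \<le> inner x x * inner y y" by (rule Cauchy_Schwarz_ineq)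
  also have "\<dots> = 4 * (x$0)^2 * (y$0)^2 - 2 * (x$0)^2 - 2*(y$0)^2 + 1"
    by (simp add: X Y algebra_simps power2_eq_square)
  finally show False using x1 y1 by (simp add: power_mult_distrib)
qed

lemma orth_spacelike:
  assumes pp: "mink p p = -1" and qp: "mink q p = 0" and q0: "q \<noteq> 0"
  shows "mink q q > 0"
proof (rule ccontr)
  assume "\<not> mink q q > 0"
  then have qq: "inner q q \<le> 2 * (q$0)^2" by (simp add: mink_inner power2_eq_square)
  have P: "inner p p = 2 * (p$0)^2 - 1" using pp by (simp add: mink_inner power2_eq_square)
  have Pn: "inner p p \<ge> 0" by simp
  have pq: "inner q p = 2 * q$0 * p$0" using qp by (simp add: mink_inner)
  have "(2 * q$0 * p$0)^2 \<le> inner q q * inner p p"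
    using Cauchy_Schwarz_ineq[of q p] pq by simp
  also have "\<dots> \<le> 2 * (q$0)^2 * inner p p"
    using qq Pn by (rule mult_right_mono)
  also have "\<dots> = 4 * (q$0)^2 * (p$0)^2 - 2 * (q$0)^2" by (simp add: P algebra_simps)
  finally have "(q$0)^2 \<le> 0" by (simp add: power_mult_distrib)
  then have "q$0 = 0" by simp
  then have "inner q q \<le> 0" using qq by simp
  then have "q = 0" by (metis inner_ge_zero inner_eq_zero_iff order_antisym)
  then show False using q0 by simp
qed

lemma half_apply:
  assumes "mink n1 n2 = 0"
  shows "(reflection_mat n1 ** reflection_mat n2) *v x
     = x - (2 * mink x n1 / mink n1 n1) *\<^sub>R n1 - (2 * mink x n2 / mink n2 n2) *\<^sub>R n2"
proof -
  have "(reflection_mat n1 ** reflection_mat n2) *v x = reflection_mat n1 *v (reflection_mat n2 *v x)"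
    by (simp add: matrix_vector_mul_assoc)
  also have "\<dots> = (x - (2 * mink x n2 / mink n2 n2) *\<^sub>R n2) - (2 * mink (x - (2 * mink x n2 / mink n2 n2) *\<^sub>R n2) n1 / mink n1 n1) *\<^sub>R n1"
    by (simp only: refl_apply)
  also have "mink (x - (2 * mink x n2 / mink n2 n2) *\<^sub>R n2) n1 = mink x n1"
    using assms by (simp add: mink_simps mink_sym[of n2 n1])
  finally show ?thesis by (simp add: algebra_simps)
qed

definition Jv :: "real^5 \<Rightarrow> real^5" where "Jv v = (\<chi> i. if i = 0 then - v$i else v$i)"

lemma mink_Jv: "mink x v = inner (Jv v) x"
proof -
  have "inner (Jv v) x = (\<Sum>i\<in>UNIV. x$i * v$i - (if i = 0 then 2 * x$0 * v$0 else 0))"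
    unfolding inner_vec_def by (rule sum.cong) (auto simp: Jv_def)
  also have "\<dots> = mink x v" by (simp add: sum_subtractf mink_def)
  finally show ?thesis by simp
qed

lemma W_subspace: "subspace {x. mink x n1 = 0 \<and> mink x n2 = 0}"
proof -
  have z: "mink 0 n = 0" for n by (simp add: mink_def)
  show ?thesis unfolding subspace_def by (auto simp: mink_simps z)
qed

lemma W_dim: "dim {x. mink x n1 = 0 \<and> mink x n2 = 0} \<ge> 3"
proof -
  let ?A = "span {Jv n1, Jv n2}"
  have e: "dim {y \<in> UNIV. \<forall>x \<in> ?A. orthogonal x y} + dim ?A = dim (UNIV :: (real^5) set)"
    by (rule dim_subspace_orthogonal_to_vectors) auto
  have "dim ?A \<le> card {Jv n1, Jv n2}" by (rule dim_le_card) auto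
  also have "\<dots> \<le> 2" by (simp add: card_insert_le_m1)
  finally have "dim ?A \<le> 2" .
  then have "dim {y \<in> UNIV. \<forall>x \<in> ?A. orthogonal x y} \<ge> 3" using e by simp
  moreover have "{y \<in> UNIV. \<forall>x \<in> ?A. orthogonal x y} \<subseteq> {x. mink x n1 = 0 \<and> mink x n2 = 0}"
    by (auto simp: mink_Jv orthogonal_def span_base)
  ultimately show ?thesis using dim_subset by (meson order_trans)
qed

lemma nondeg: assumes "\<And>y. mink z y = 0" shows "z = 0"
proof (subst vec_eq_iff, intro allI)
  fix i
  have "mink z (axis i 1) = 0" by (rule assms)
  then show "z $ i = 0 $ i" by (simp add: mink_sym[of z] mink_axis split: if_splits)
qed

locale halfturn =
  fixes n1 n2 :: "real^5"
  assumes n1: "mink n1 n1 > 0" and n2: "mink n2 n2 > 0" and n12: "mink n1 n2 = 0"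
begin

definition "A = reflection_mat n1 ** reflection_mat n2"

lemma A_apply: "A *v x = x - (2 * mink x n1 / mink n1 n1) *\<^sub>R n1 - (2 * mink x n2 / mink n2 n2) *\<^sub>R n2"
  unfolding A_def by (rule half_apply[OF n12])

lemma A_isom: "mink (A *v x) (A *v y) = mink x y"
  unfolding A_def using n1 n2
  by (simp add: matrix_vector_mul_assoc[symmetric] refl_isom)

lemma A_n1: "mink (A *v x) n1 = - mink x n1"
  using n1 n12 by (simp add: A_apply mink_simps mink_sym[of n2 n1] field_simps)

lemma A_n2: "mink (A *v x) n2 = - mink x n2"
  using n2 n12 by (simp add: A_apply mink_simps field_simps)

lemma A_invol: "A *v (A *v x) = x"
  by (simp add: A_apply[of "A *v x"] A_n1 A_n2) (simp add: A_apply algebra_simps)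

lemma A_fix: "mink x n1 = 0 \<Longrightarrow> mink x n2 = 0 \<Longrightarrow> A *v x = x"
  by (simp add: A_apply)

lemma A_det: "det A = 1"
  using det_refl[OF n1] det_refl[OF n2] by (simp add: A_def det_mul)

lemma A_H4: assumes "x \<in> H4" shows "A *v x \<in> H4"
proof -
  have xx: "mink x x = -1" and x0: "x$0 > 0" using assms by (auto simp: H4_def)
  have yy: "mink (A *v x) (A *v x) = -1" using A_isom xx by simp
  have "mink x (A *v x) = mink x x - 2 * (mink x n1)^2 / mink n1 n1 - 2 * (mink x n2)^2 / mink n2 n2"
    by (simp add: A_apply mink_simps power2_eq_square mink_sym[of n1 x] mink_sym[of n2 x])
  also have "\<dots> \<le> -1"
  proof -
    have "0 \<le> 2 * (mink x n1)^2 / mink n1 n1" using n1 by simp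
    moreover have "0 \<le> 2 * (mink x n2)^2 / mink n2 n2" using n2 by simp
    ultimately show ?thesis using xx by linarith
  qed
  finally have "mink x (A *v x) < 0" by simp
  then have "(A *v x)$0 > 0" using sheet[OF xx x0 yy] by simp
  then show ?thesis using yy by (simp add: H4_def)
qed

lemma A_image: "(\<lambda>x. A *v x) ` H4 = H4"
proof
  show "(\<lambda>x. A *v x) ` H4 \<subseteq> H4" using A_H4 by auto
  show "H4 \<subseteq> (\<lambda>x. A *v x) ` H4"
  proof
    fix x assume "x \<in> H4"
    then show "x \<in> (\<lambda>x. A *v x) ` H4"
      using A_H4 A_invol[of x] by (metis image_eqI)
  qed
qed

end


theorem lemma6p6:
  assumes "hyp_plane P" and "hyp_plane Q" and "P \<noteq> Q"
    and "\<exists>!x. x \<in> P \<inter> Q"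
    and "is_half_turn P A" and "is_half_turn Q B"
  shows "hyp_isometry (A ** B) \<and> elliptic (A ** B) \<and> elliptic_type_II (A ** B)
         \<and> orientation_preserving (A ** B)"
proof -
  obtain n1 n2 where hn: "mink n1 n1 > 0" "mink n2 n2 > 0" "mink n1 n2 = 0"
    and P: "P = hyperplane_of n1 \<inter> hyperplane_of n2"
    and A: "A = reflection_mat n1 ** reflection_mat n2"
    using assms(5) unfolding is_half_turn_def by blast
  obtain k1 k2 where hk: "mink k1 k1 > 0" "mink k2 k2 > 0" "mink k1 k2 = 0"
    and Q: "Q = hyperplane_of k1 \<inter> hyperplane_of k2"
    and B: "B = reflection_mat k1 ** reflection_mat k2"
    using assms(6) unfolding is_half_turn_def by blast
  interpret a: halfturn n1 n2 using hn by unfold_locales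
  interpret b: halfturn k1 k2 using hk by unfold_locales
  have Aeq: "A = a.A" by (simp add: A a.A_def)
  have Beq: "B = b.A" by (simp add: B b.A_def)
  define WP where "WP = {x. mink x n1 = 0 \<and> mink x n2 = 0}"
  define WQ where "WQ = {x. mink x k1 = 0 \<and> mink x k2 = 0}"
  have Pc: "x \<in> P \<longleftrightarrow> x \<in> H4 \<and> x \<in> WP" for x by (auto simp: P WP_def hyperplane_of_def)
  have Qc: "x \<in> Q \<longleftrightarrow> x \<in> H4 \<and> x \<in> WQ" for x by (auto simp: Q WQ_def hyperplane_of_def)
  obtain p where pPQ: "p \<in> P \<inter> Q" and puniq: "\<And>x. x \<in> P \<inter> Q \<Longrightarrow> x = p"
    using assms(4) by blast
  have pH: "p \<in> H4" and pWP: "p \<in> WP" and pWQ: "p \<in> WQ" using pPQ Pc Qc by auto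
  have pp: "mink p p = -1" and p0: "p$0 > 0" using pH by (auto simp: H4_def)
  have Mapp: "(A ** B) *v x = a.A *v (b.A *v x)" for x
    by (simp add: Aeq Beq matrix_vector_mul_assoc)
  have iso: "hyp_isometry (A ** B)"
  proof -
    have "(\<lambda>x. (A ** B) *v x) ` H4 = (\<lambda>x. a.A *v x) ` ((\<lambda>x. b.A *v x) ` H4)"
      by (simp add: Mapp image_image)
    also have "\<dots> = H4" by (simp add: a.A_image b.A_image)
    finally show ?thesis unfolding hyp_isometry_def by (simp add: Mapp a.A_isom b.A_isom)
  qed
  have det: "det (A ** B) = 1" by (simp add: det_mul Aeq Beq a.A_det b.A_det)
  have fixp: "(A ** B) *v p = p"
    using pWP pWQ by (simp add: Mapp a.A_fix b.A_fix WP_def WQ_def)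
  define S where "S = WP \<inter> WQ"
  have Ssub: "subspace S"
    unfolding S_def WP_def WQ_def using W_subspace[of n1 n2] W_subspace[of k1 k2]
    by (rule subspace_inter)
  have Sspan: "S \<subseteq> span {p}"
  proof
    fix q assume qS: "q \<in> S"
    define q' where "q' = q + mink q p *\<^sub>R p"
    have q'S: "q' \<in> S" using qS pWP pWQ
      by (simp add: S_def WP_def WQ_def q'_def mink_simps)
    have q'p: "mink q' p = 0" using pp by (simp add: q'_def mink_simps)
    show "q \<in> span {p}"
    proof (cases "q' = 0")
      case True
      then have "q = (- mink q p) *\<^sub>R p" by (simp add: q'_def eq_neg_iff_add_eq_0)
      then show ?thesis unfolding span_singleton by (rule range_eqI)
    next
      case False
      have sp: "mink q' q' > 0" by (rule orth_spacelike[OF pp q'p False])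
      define a where "a = sqrt (1 + mink q' q')"
      have a2: "a^2 = 1 + mink q' q'" using sp by (simp add: a_def)
      have apos: "a > 0" using sp by (simp add: a_def)
      define x' where "x' = a *\<^sub>R p + q'"
      have xx: "mink x' x' = -1"
        using pp q'p a2 by (simp add: x'_def mink_simps mink_sym[of p q'] power2_eq_square)
      have px: "mink p x' < 0"
        using pp q'p apos by (simp add: x'_def mink_simps mink_sym[of p q'])
      have x0: "x'$0 > 0" by (rule sheet[OF pp p0 xx px])
      have "x' \<in> S" using q'S pWP pWQ
        by (simp add: S_def WP_def WQ_def x'_def mink_simps)
      then have "x' \<in> P \<inter> Q" using xx x0 by (simp add: Pc Qc S_def H4_def)
      then have "x' = p" by (rule puniq)
      then have "q' = (1 - a) *\<^sub>R p" by (simp add: x'_def algebra_simps)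
      then have "mink q' q' = (1 - a) * ((1 - a) * mink p p)" by (simp only: mink_scale_left mink_scale_right)
      then have "mink q' q' = - ((1 - a)^2)" using pp by (simp add: power2_eq_square algebra_simps)
      then show ?thesis using sp by (simp add: power2_eq_square)
    qed
  qed
  have dimS: "dim S \<le> 1"
  proof -
    have "dim S \<le> dim (span {p})" by (rule dim_subset[OF Sspan])
    also have "\<dots> \<le> card {p}" by (simp add: dim_le_card)
    finally show ?thesis by simp
  qed
  define T where "T = {x + y |x y. x \<in> WP \<and> y \<in> WQ}"
  have Tsub: "subspace T" unfolding T_def WP_def WQ_def
    by (rule subspace_sums[OF W_subspace W_subspace])
  have "dim T + dim S = dim WP + dim WQ"
    unfolding T_def S_def WP_def WQ_def by (rule dim_sums_Int[OF W_subspace W_subspace])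
  moreover have "dim WP \<ge> 3" "dim WQ \<ge> 3" unfolding WP_def WQ_def by (rule W_dim)+
  ultimately have "dim T \<ge> 5" using dimS by linarith
  moreover have "dim T \<le> 5" using dim_subset_UNIV_cart[of T] by simp
  ultimately have "dim T = DIM(real^5)" by simp
  then have "span T = UNIV" by (simp only: dim_eq_full)
  then have TU: "T = UNIV" using Tsub by (metis span_eq_iff)
  have uniq: "x = p" if xH: "x \<in> H4" and fx: "(A ** B) *v x = x" for x
  proof -
    have e1: "b.A *v x = a.A *v x"
    proof -
      have "b.A *v x = a.A *v (a.A *v (b.A *v x))" by (simp add: a.A_invol)
      also have "\<dots> = a.A *v x" using fx by (simp add: Mapp)
      finally show ?thesis .
    qed
    define c1 where "c1 = 2 * mink x n1 / mink n1 n1"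
    define c2 where "c2 = 2 * mink x n2 / mink n2 n2"
    define d1 where "d1 = 2 * mink x k1 / mink k1 k1"
    define d2 where "d2 = 2 * mink x k2 / mink k2 k2"
    define z where "z = c1 *\<^sub>R n1 + c2 *\<^sub>R n2"
    have z2: "z = d1 *\<^sub>R k1 + d2 *\<^sub>R k2"
    proof -
      have "x - c1 *\<^sub>R n1 - c2 *\<^sub>R n2 = x - d1 *\<^sub>R k1 - d2 *\<^sub>R k2"
        using e1 by (simp add: a.A_apply b.A_apply c1_def c2_def d1_def d2_def)
      then show ?thesis by (simp add: z_def algebra_simps)
    qed
    have zP: "mink z w = 0" if "w \<in> WP" for w
      using that by (simp add: z_def WP_def mink_simps mink_sym[of n1 w] mink_sym[of n2 w])
    have zQ: "mink z w = 0" if "w \<in> WQ" for w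
      using that by (simp add: z2 WQ_def mink_simps mink_sym[of k1 w] mink_sym[of k2 w])
    have "mink z y = 0" for y
    proof -
      have "y \<in> T" using TU by simp
      then obtain w w' where "y = w + w'" "w \<in> WP" "w' \<in> WQ" unfolding T_def by blast
      then show ?thesis using zP zQ by (simp add: mink_simps)
    qed
    then have z0: "z = 0" by (rule nondeg)
    have "mink z n1 = c1 * mink n1 n1" using hn by (simp add: z_def mink_simps mink_sym[of n2 n1])
    then have "c1 = 0" using z0 hn by (simp add: mink_def)
    then have x1: "mink x n1 = 0" using hn by (simp add: c1_def)
    have "mink z n2 = c2 * mink n2 n2" using hn by (simp add: z_def mink_simps)
    then have "c2 = 0" using z0 hn by (simp add: mink_def)
    then have x2: "mink x n2 = 0" using hn by (simp add: c2_def)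
    have "mink z k1 = d1 * mink k1 k1" using hk by (simp add: z2 mink_simps mink_sym[of k2 k1])
    then have "d1 = 0" using z0 hk by (simp add: mink_def)
    then have x3: "mink x k1 = 0" using hk by (simp add: d1_def)
    have "mink z k2 = d2 * mink k2 k2" using hk by (simp add: z2 mink_simps)
    then have "d2 = 0" using z0 hk by (simp add: mink_def)
    then have x4: "mink x k2 = 0" using hk by (simp add: d2_def)
    have "x \<in> P \<inter> Q" using xH x1 x2 x3 x4 by (simp add: Pc Qc WP_def WQ_def)
    then show ?thesis by (rule puniq)
  qed
  have ell: "elliptic (A ** B)" unfolding elliptic_def using iso fixp pH by blast
  have t2: "elliptic_type_II (A ** B)" unfolding elliptic_type_II_def
    using ell fixp pH uniq by blast
  show ?thesis using iso ell t2 det by (simp add: orientation_preserving_def)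
qed

end
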